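(* Assume $\beta>0$, $\theta\ne\eta$, and let $\mu$ (with density $\mu(x)$) be the unique minimizer of $I^{(\xi)}$ over $\mathfrak P$. Then: Case $\theta>\eta$ (set $\nu=\theta/\eta$, $\rho=\eta$): (i) if $\xi\in(-\gamma^2,0]$: $\mu(x)=\eta x^{\eta-1}\omega_\nu(x^\eta)$ where $\omega_\nu$ solves Problem 1 with $\kappa=\gamma^2-|\xi|$, $m_1=|\xi|/\kappa$, $n_1=-|\xi|$, $n_2=1-\gamma^2$, $\alpha=\theta$; (ii) if $\xi\in(0,1-\gamma^2]$: $\mu(x)=\eta x^{\eta-1}\omega_\nu(x^\eta)$ with Problem 1 and $\kappa=\gamma^2$, $m_1=\frac{\theta\xi}{\eta\kappa}$, $n_1=0$, $n_2=1-\gamma^2-\xi$, $\alpha=\theta$; (iii) if $\xi\in(1-\gamma^2,1]$: $\mu(x)=\eta x^{\eta-1}\omega_1(x^\eta)$ where $\omega_1$ solves Problem 2 with $\kappa=1-\xi$, $m_1=\frac{\theta\xi}{\eta\kappa}$, $n_1=1-\gamma^2-\xi$, $n_2=0$, $\alpha=\eta$. Case $\eta>\theta$ (set $\nu=\eta/\theta$, $\rho=\theta$): (i) if $\xi\in(-\gamma^2,0]$: $\mu(x)=\theta x^{\theta-1}\omega_1(x^\theta)$ with Problem 2 and $\kappa=\gamma^2-|\xi|$, $m_1=\frac{|\xi|\eta}{\kappa\theta}$, $n_1=-|\xi|$, $n_2=1-\gamma^2$, $\alpha=\theta$; (ii) if $\xi\in(0,1-\gamma^2]$: $\mu(x)=\theta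 x^{\theta-1}\omega_1(x^\theta)$ with Problem 2 and $\kappa=\gamma^2$, $m_1=\xi/\kappa$, $n_1=0$, $n_2=1-\gamma^2-\xi$, $\alpha=\theta$; (iii) if $\xi\in(1-\gamma^2,1]$: $\mu(x)=\theta x^{\theta-1}\omega_\nu(x^\theta)$ with Problem 1 and $\kappa=1-\xi$, $m_1=\xi/\kappa$, $n_1=1-\gamma^2-\xi$, $n_2=0$, $\alpha=\eta$.
   Context: Fix $\eta,\theta>0$, $\gamma\in(0,1)$, $\beta>0$, $\xi\in(-\gamma^2,1]$; $\kappa=\gamma^2-|\xi|$, $\gamma^2$, $1-\xi$ according as $\xi\in(-\gamma^2,0]$, $(0,1-\gamma^2]$, $(1-\gamma^2,1]$. $\mathcal P^c([0,h])$ is the set of probability measures on $[0,h]$ absolutely continuous with density $\le\frac1{cx}$; $\mathfrak P=\mathcal P^{\beta\kappa}([0,e^{-\beta(\gamma^2-\kappa)}])$. $I^{(\xi)}(\mu)=-H^{(\xi)}(\mu)-K^{(\xi)}(\mu)-M^{(\xi)}(\mu)$, $H^{(\xi)}(\mu)=\frac{\kappa^2}{2}\iint(\ln|x^\theta-y^\theta|+\ln|x^\eta-y^\eta|)d\mu d\mu$, and (i) $\xi\in(-\gamma^2,0]$: $K^{(\xi)}(\mu)=\kappa\int\int_{\gamma^2-1}^{|\xi|}\ln(1-x^\theta e^{\beta\theta u})du\,d\mu(x)$, $M^{(\xi)}(\mu)=\kappa\eta|\xi|\int\ln x\,d\mu$; (ii) $\xi\in(0,1-\gamma^2]$: $K^{(\xi)}(\mu)=\kappa\int\int_0^{1-\gamma^2-\xi}\ln(1-x^\theta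 e^{-\beta\theta u})du\,d\mu(x)$, $M^{(\xi)}(\mu)=\kappa\theta\xi\int\ln x\,d\mu$; (iii) $\xi\in(1-\gamma^2,1]$: $K^{(\xi)}(\mu)=\kappa\int\int_{1-\gamma^2-\xi}^{0}\ln(1-x^\eta e^{-\beta\eta u})du\,d\mu(x)$, $M^{(\xi)}(\mu)=\kappa\theta\xi\int\ln x\,d\mu$. Model problems: given $\nu>1$, $\beta,\kappa,\alpha,\rho>0$, $m_1\ge0$, $n_2\ge n_1$ with $n_1\alpha=-\rho(\gamma^2-\kappa)$, and $x_{\max}=e^{-\rho\beta(\gamma^2-\kappa)}$. Problem 1: minimize over $\omega\in\mathcal P^{\beta\rho\kappa}([0,x_{\max}])$ the functional $\mathcal I_\nu[\omega]=-\frac12\iint(\ln|x^\nu-y^\nu|+\ln|x-y|)\omega(dx)\omega(dy)-\frac1\kappa\int\int_{n_1}^{n_2}\ln(1-x^\nu e^{-\beta\alpha u})du\,\omega(dx)-m_1\int\ln x\,\omega(dx)$; its minimizer is denoted $\omega_\nu$. Problem 2: same with $\ln(1-x^\nu e^{-\beta\alpha u})$ replaced by $\ln(1-xe^{-\beta\alpha u})$; its minimizer is denoted $\omega_1$. *)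

theory Defs
  imports "HOL-Probability.Probability"
begin

definition PP :: "real \<Rightarrow> real \<Rightarrow> real measure set" where
  "PP c h = {M. \<exists>f. f \<in> borel_measurable borel \<and> (\<forall>x. 0 \<le> f x)
      \<and> (\<forall>x. x \<notin> {0..h} \<longrightarrow> f x = 0)
      \<and> (\<forall>x\<in>{0<..h}. f x \<le> 1 / (c * x))
      \<and> M = density lborel (\<lambda>x. ennreal (f x)) \<and> prob_space M}"

definition kap :: "real \<Rightarrow> real \<Rightarrow> real" where
  "kap gamma xi = (if xi \<le> 0 then gamma\<^sup>2 - \<bar>xi\<bar>
                   else if xi \<le> 1 - gamma\<^sup>2 then gamma\<^sup>2 else 1 - xi)"

definition Pfrak :: "real \<Rightarrow> real \<Rightarrow> real \<Rightarrow> real measure set" where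
  "Pfrak gamma beta xi = PP (beta * kap gamma xi) (exp (- beta * (gamma\<^sup>2 - kap gamma xi)))"

text \<open>All three pieces -H, -K, -M are nonnegative on frak P (the integrands are
  nonpositive there), so the functional is written as an extended nonnegative value,
  with value infinity when an integral diverges.\<close>
definition Ixi :: "real \<Rightarrow> real \<Rightarrow> real \<Rightarrow> real \<Rightarrow> real \<Rightarrow> real measure \<Rightarrow> ennreal" where
  "Ixi eta theta gamma beta xi M =
    (let k = kap gamma xi in
     ennreal (k\<^sup>2 / 2) *
       (\<integral>\<^sup>+x. \<integral>\<^sup>+y. ennreal (- (ln \<bar>x powr theta - y powr theta\<bar> + ln \<bar>x powr eta - y powr eta\<bar>)) \<partial>M \<partial>M)
     + (if xi \<le> 0 then
          ennreal k * (\<integral>\<^sup>+x. \<integral>\<^sup>+u. indicator {gamma\<^sup>2 - 1..\<bar>xi\<bar>} u *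
               ennreal (- ln (1 - x powr theta * exp (beta * theta * u))) \<partial>lborel \<partial>M)
          + ennreal (k * eta * \<bar>xi\<bar>) * (\<integral>\<^sup>+x. ennreal (- ln x) \<partial>M)
        else if xi \<le> 1 - gamma\<^sup>2 then
          ennreal k * (\<integral>\<^sup>+x. \<integral>\<^sup>+u. indicator {0..1 - gamma\<^sup>2 - xi} u *
               ennreal (- ln (1 - x powr theta * exp (- beta * theta * u))) \<partial>lborel \<partial>M)
          + ennreal (k * theta * xi) * (\<integral>\<^sup>+x. ennreal (- ln x) \<partial>M)
        else
          ennreal k * (\<integral>\<^sup>+x. \<integral>\<^sup>+u. indicator {1 - gamma\<^sup>2 - xi..0} u *
               ennreal (- ln (1 - x powr eta * exp (- beta * eta * u))) \<partial>lborel \<partial>M)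
          + ennreal (k * theta * xi) * (\<integral>\<^sup>+x. ennreal (- ln x) \<partial>M)))"

text \<open>Model functional; phi x = x powr nu gives Problem 1, phi x = x gives Problem 2.\<close>
definition model_I :: "real \<Rightarrow> (real \<Rightarrow> real) \<Rightarrow> real \<Rightarrow> real \<Rightarrow> real \<Rightarrow> real \<Rightarrow> real \<Rightarrow> real
    \<Rightarrow> real measure \<Rightarrow> ennreal" where
  "model_I nu phi beta kappa alpha m1 n1 n2 M =
     ennreal (1/2) *
       (\<integral>\<^sup>+x. \<integral>\<^sup>+y. ennreal (- (ln \<bar>x powr nu - y powr nu\<bar> + ln \<bar>x - y\<bar>)) \<partial>M \<partial>M)
     + ennreal (1 / kappa) * (\<integral>\<^sup>+x. \<integral>\<^sup>+u. indicator {n1..n2} u *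
               ennreal (- ln (1 - phi x * exp (- beta * alpha * u))) \<partial>lborel \<partial>M)
     + ennreal m1 * (\<integral>\<^sup>+x. ennreal (- ln x) \<partial>M)"

definition is_min :: "(real measure \<Rightarrow> ennreal) \<Rightarrow> real measure set \<Rightarrow> real measure \<Rightarrow> bool" where
  "is_min F S M \<longleftrightarrow> M \<in> S \<and> (\<forall>N\<in>S. F M \<le> F N)"

definition model_min :: "real \<Rightarrow> (real \<Rightarrow> real) \<Rightarrow> real \<Rightarrow> real \<Rightarrow> real \<Rightarrow> real \<Rightarrow> real \<Rightarrow> real
    \<Rightarrow> real \<Rightarrow> real \<Rightarrow> real measure \<Rightarrow> bool" where
  "model_min nu phi beta kappa alpha m1 n1 n2 rho gamma \<omega> \<longleftrightarrow>
     is_min (model_I nu phi beta kappa alpha m1 n1 n2)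
            (PP (beta * rho * kappa) (exp (- rho * beta * (gamma\<^sup>2 - kappa)))) \<omega>"

definition pulled_back :: "real measure \<Rightarrow> real \<Rightarrow> real measure \<Rightarrow> bool" where
  "pulled_back mu rho \<omega> \<longleftrightarrow> (\<exists>g. g \<in> borel_measurable borel \<and> (\<forall>t. 0 \<le> g t)
      \<and> \<omega> = density lborel (\<lambda>t. ennreal (g t))
      \<and> mu = density lborel (\<lambda>x. ennreal (if 0 < x then rho * x powr (rho - 1) * g (x powr rho) else 0)))"

end

theory Submission
  imports Defs
begin

lemma powr_image:
  fixes a b r :: real assumes "0 < a" "a \<le> b" "0 < r"
  shows "(\<lambda>x. x powr r) ` {a..b} = {a powr r..b powr r}"
proof
  show "(\<lambda>x. x powr r) ` {a..b} \<subseteq> {a powr r..b powr r}"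
    using assms by (auto intro!: powr_mono2)
  show "{a powr r..b powr r} \<subseteq> (\<lambda>x. x powr r) ` {a..b}"
  proof
    fix t assume t: "t \<in> {a powr r..b powr r}"
    have tp: "t > 0" using t assms by (auto intro: less_le_trans[of 0 "a powr r"])
    have "t = (t powr (1/r)) powr r" using tp assms by (simp add: powr_powr)
    moreover have "t powr (1/r) \<in> {a..b}"
    proof -
      have "(a powr r) powr (1/r) \<le> t powr (1/r)" using t assms by (intro powr_mono2) auto
      moreover have "t powr (1/r) \<le> (b powr r) powr (1/r)" using t assms tp by (intro powr_mono2) auto
      ultimately show ?thesis using assms by (simp add: powr_powr)
    qed
    ultimately show "t \<in> (\<lambda>x. x powr r) ` {a..b}" by blast
  qed
qed

lemma subst_pos:
  fixes F :: "real \<Rightarrow> ennreal" and r :: real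
  assumes F[measurable]: "F \<in> borel_measurable borel" and r: "0 < r"
  shows "(\<integral>\<^sup>+t. F t * indicator {0<..} t \<partial>lborel)
       = (\<integral>\<^sup>+x. F (x powr r) * ennreal (r * x powr (r - 1)) * indicator {0<..} x \<partial>lborel)"
proof -
  define I where "I n = {inverse (real n + 2) .. real n + 2}" for n :: nat
  have Ipos: "0 < inverse (real n + 2)" for n by simp
  have Ilt: "inverse (real n + 2) < real n + 2" for n
  proof -
    have "inverse (real n + 2) \<le> 1/2" by (simp add: field_simps)
    then show ?thesis by linarith
  qed
  have incI: "incseq I"
  proof (rule incseq_SucI)
    fix n
    have "inverse (real (Suc n) + 2) \<le> inverse (real n + 2)" by (auto simp: field_simps)
    then show "I n \<subseteq> I (Suc n)" unfolding I_def by auto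
  qed
  have UI: "(\<Union>n. I n) = {0<..}"
  proof
    show "(\<Union>n. I n) \<subseteq> {0<..}" unfolding I_def using Ipos by (auto intro: order.strict_trans2[OF Ipos])
    show "{0<..} \<subseteq> (\<Union>n. I n)"
    proof
      fix x :: real assume x: "x \<in> {0<..}"
      obtain n :: nat where n: "max x (inverse x) < real n" using reals_Archimedean2 by blast
      have "x \<le> real n + 2" using n by simp
      moreover have "inverse (real n + 2) \<le> x"
      proof -
        have "inverse x < real n + 2" using n by simp
        then have "inverse (real n + 2) < inverse (inverse x)" using x
          by (intro less_imp_inverse_less) auto
        then show ?thesis using x by simp
      qed
      ultimately show "x \<in> (\<Union>n. I n)" unfolding I_def by auto
    qed
  qed
  define T where "T x = x powr r" for x :: real
  define G where "G x = F (x powr r) * ennreal (r * x powr (r - 1))" for x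
  have G[measurable]: "G \<in> borel_measurable borel" unfolding G_def by measurable
  have TI: "T ` I n = {inverse (real n + 2) powr r .. (real n + 2) powr r}" for n
    unfolding T_def I_def using Ipos[of n] Ilt[of n] r by (intro powr_image) auto
  have incTI: "incseq (\<lambda>n. T ` I n)" using incI by (auto simp: incseq_def image_mono)
  have UTI: "(\<Union>n. T ` I n) = {0<..}"
  proof -
    have "(\<Union>n. T ` I n) = T ` (\<Union>n. I n)" by auto
    also have "\<dots> = {0<..}" unfolding UI
    proof
      show "T ` {0<..} \<subseteq> {0<..}" unfolding T_def by auto
      show "{0<..} \<subseteq> T ` {0<..}"
      proof
        fix t :: real assume t: "t \<in> {0<..}"
        then have "t = T (t powr (1/r))" using r unfolding T_def by (simp add: powr_powr)
        moreover have "t powr (1/r) \<in> {0<..}" using t by simp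
        ultimately show "t \<in> T ` {0<..}" by blast
      qed
    qed
    finally show ?thesis .
  qed
  have step: "(\<integral>\<^sup>+t. F t * indicator (T ` I n) t \<partial>lborel) = (\<integral>\<^sup>+x. G x * indicator (I n) x \<partial>lborel)" for n
  proof -
    have "(\<integral>\<^sup>+t. F t * indicator (T ` I n) t \<partial>lborel)
      = (\<integral>\<^sup>+t. F t * indicator {T (inverse (real n + 2)) .. T (real n + 2)} t \<partial>lborel)"
      using TI unfolding T_def by simp
    also have "\<dots> = (\<integral>\<^sup>+x. F (T x) * ennreal (r * x powr (r - 1)) * indicator {inverse (real n + 2) .. real n + 2} x \<partial>lborel)"
    proof (rule nn_integral_substitution_aux)
      show "F \<in> borel_measurable borel" by simp
      show "0 \<le> F x" for x by simp
      show "(T has_real_derivative r * x powr (r - 1)) (at x)" if "x \<in> {inverse (real n + 2)..real n + 2}" for x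
      proof -
        have "x > 0" using that Ipos[of n] by (auto intro: order.strict_trans2[OF Ipos])
        then show ?thesis unfolding T_def using DERIV_fun_powr[OF DERIV_ident, of x r] by simp
      qed
      show "continuous_on {inverse (real n + 2)..real n + 2} (\<lambda>x. r * x powr (r - 1))"
        using Ipos[of n] by (intro continuous_intros) (auto dest: less_le_trans)
      show "0 \<le> r * x powr (r - 1)" for x using r by simp
      show "inverse (real n + 2) < real n + 2" by (rule Ilt)
    qed
    finally show ?thesis unfolding G_def T_def I_def by simp
  qed
  have "(\<integral>\<^sup>+t. F t * indicator {0<..} t \<partial>lborel) = emeasure (density lborel F) {0<..}"
    by (simp add: emeasure_density)
  also have "\<dots> = (SUP n. emeasure (density lborel F) (T ` I n))"
    using UTI incTI by (subst SUP_emeasure_incseq) (auto simp: TI)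
  also have "\<dots> = (SUP n. emeasure (density lborel G) (I n))"
  proof -
    have "emeasure (density lborel F) (T ` I n) = emeasure (density lborel G) (I n)" for n
    proof -
      have "emeasure (density lborel F) (T ` I n) = (\<integral>\<^sup>+t. F t * indicator (T ` I n) t \<partial>lborel)"
        by (subst emeasure_density) (auto simp: TI)
      also have "\<dots> = (\<integral>\<^sup>+x. G x * indicator (I n) x \<partial>lborel)" by (rule step)
      also have "\<dots> = emeasure (density lborel G) (I n)"
        by (subst emeasure_density) (auto simp: I_def)
      finally show ?thesis .
    qed
    then show ?thesis by simp
  qed
  also have "\<dots> = emeasure (density lborel G) {0<..}"
    using UI incI by (subst SUP_emeasure_incseq) (auto simp: I_def)
  also have "\<dots> = (\<integral>\<^sup>+x. G x * indicator {0<..} x \<partial>lborel)"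
    by (simp add: emeasure_density)
  finally show ?thesis unfolding G_def .
qed

definition pw_dens :: "(real \<Rightarrow> real) \<Rightarrow> real \<Rightarrow> real \<Rightarrow> real" where
  "pw_dens f r t = (if 0 < t then f (t powr (1/r)) * (1/r) * t powr (1/r - 1) else 0)"

lemma pw_dens_meas:
  assumes [measurable]: "f \<in> borel_measurable borel" shows "pw_dens f r \<in> borel_measurable borel"
  unfolding pw_dens_def by measurable

lemma pw_dens_nonneg: "(\<And>x. 0 \<le> f x) \<Longrightarrow> 0 < r \<Longrightarrow> 0 \<le> pw_dens f r t"
  unfolding pw_dens_def by auto

lemma pw_dens_back:
  assumes "0 < r" "0 < x"
  shows "pw_dens f r (x powr r) * (r * x powr (r - 1)) = f x"
proof -
  have "(x powr r) powr (1/r - 1) * x powr (r - 1) = 1"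
    using assms by (simp add: powr_powr powr_add[symmetric] field_simps)
  moreover have "(x powr r) powr (1/r) = x" using assms by (simp add: powr_powr)
  ultimately show ?thesis using assms unfolding pw_dens_def
    by (simp add: field_simps)
qed

lemma distr_powr_density:
  fixes f :: "real \<Rightarrow> real" and r :: real
  assumes f[measurable]: "f \<in> borel_measurable borel" and f0: "\<And>x. 0 \<le> f x"
    and fneg: "\<And>x. x < 0 \<Longrightarrow> f x = 0" and r: "0 < r"
  shows "distr (density lborel (\<lambda>x. ennreal (f x))) lborel (\<lambda>x. x powr r)
       = density lborel (\<lambda>t. ennreal (pw_dens f r t))"
proof (rule measure_eqI)
  show "sets (distr (density lborel (\<lambda>x. ennreal (f x))) lborel (\<lambda>x. x powr r))
      = sets (density lborel (\<lambda>t. ennreal (pw_dens f r t)))" by simp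
  fix A assume "A \<in> sets (distr (density lborel (\<lambda>x. ennreal (f x))) lborel (\<lambda>x. x powr r))"
  then have A[measurable]: "A \<in> sets borel" by simp
  define g where "g t = f (t powr (1/r)) * (1/r) * t powr (1/r - 1)" for t
  have g[measurable]: "g \<in> borel_measurable borel" unfolding g_def by measurable
  have "emeasure (distr (density lborel (\<lambda>x. ennreal (f x))) lborel (\<lambda>x. x powr r)) A
     = emeasure (density lborel (\<lambda>x. ennreal (f x))) ((\<lambda>x. x powr r) -` A)"
    by (subst emeasure_distr) auto
  also have "\<dots> = (\<integral>\<^sup>+x. ennreal (f x) * indicator ((\<lambda>x. x powr r) -` A) x \<partial>lborel)"
    using measurable_sets[of "\<lambda>x. x powr r" borel borel A] by (subst emeasure_density) auto
  also have "\<dots> = (\<integral>\<^sup>+x. (ennreal (g (x powr r)) * indicator A (x powr r)) * ennreal (r * x powr (r - 1)) * indicator {0<..} x \<partial>lborel)"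
  proof (rule nn_integral_cong_AE)
    show "AE x in lborel. ennreal (f x) * indicator ((\<lambda>x. x powr r) -` A) x =
        (ennreal (g (x powr r)) * indicator A (x powr r)) * ennreal (r * x powr (r - 1)) * indicator {0<..} x"
      using AE_lborel_singleton[of 0]
    proof eventually_elim
      case (elim x)
      show ?case
      proof (cases "0 < x")
        case True
        have "ennreal (g (x powr r)) * ennreal (r * x powr (r - 1)) = ennreal (f x)"
          using pw_dens_back[OF r True, of f] True r f0
          by (subst ennreal_mult[symmetric]) (auto simp: pw_dens_def g_def)
        then show ?thesis using True by (auto simp: indicator_def mult_ac)
      next
        case False
        then show ?thesis using elim fneg[of x] by auto
      qed
    qed
  qed
  also have "\<dots> = (\<integral>\<^sup>+t. (ennreal (g t) * indicator A t) * indicator {0<..} t \<partial>lborel)"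
    by (rule subst_pos[symmetric]) (auto simp: r)
  also have "\<dots> = (\<integral>\<^sup>+t. ennreal (pw_dens f r t) * indicator A t \<partial>lborel)"
    by (rule nn_integral_cong) (auto simp: pw_dens_def g_def indicator_def)
  also have "\<dots> = emeasure (density lborel (\<lambda>t. ennreal (pw_dens f r t))) A"
    using pw_dens_meas[OF f, of r] by (subst emeasure_density) auto
  finally show "emeasure (distr (density lborel (\<lambda>x. ennreal (f x))) lborel (\<lambda>x. x powr r)) A =
         emeasure (density lborel (\<lambda>t. ennreal (pw_dens f r t))) A" .
qed


lemma PP_pos:
  assumes "M \<in> PP c h" shows "0 < c"
proof (rule ccontr)
  assume nc: "\<not> 0 < c"
  from assms obtain f where f[measurable]: "f \<in> borel_measurable borel" and f0: "\<forall>x. 0 \<le> f x"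
    and fout: "\<forall>x. x \<notin> {0..h} \<longrightarrow> f x = 0" and fb: "\<forall>x\<in>{0<..h}. f x \<le> 1 / (c * x)"
    and M: "M = density lborel (\<lambda>x. ennreal (f x))" and P: "prob_space M"
    unfolding PP_def by blast
  have z: "f x = 0" if "x \<noteq> 0" for x
  proof (cases "x \<in> {0<..h}")
    case True
    then have "1 / (c * x) \<le> 0" using nc by (auto simp: divide_le_0_iff mult_le_0_iff)
    then show ?thesis using fb f0 True by (meson order_antisym order_trans)
  next
    case False
    then show ?thesis using fout that by auto
  qed
  have "M = density lborel (\<lambda>x. 0)"
    unfolding M using AE_lborel_singleton[of 0] by (intro density_cong) (auto simp: z)
  then have "emeasure M (space M) = 0" by (simp add: emeasure_density)
  moreover have "emeasure M (space M) = 1" using P by (simp add: prob_space.emeasure_space_1)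
  ultimately show False by simp
qed

lemma PP_push:
  assumes "M \<in> PP c h" "0 < r" "0 < h"
  shows "distr M lborel (\<lambda>x. x powr r) \<in> PP (c * r) (h powr r)"
proof -
  have c: "0 < c" using PP_pos[OF assms(1)] .
  from assms(1) obtain f where f[measurable]: "f \<in> borel_measurable borel" and f0: "\<forall>x. 0 \<le> f x"
    and fout: "\<forall>x. x \<notin> {0..h} \<longrightarrow> f x = 0" and fb: "\<forall>x\<in>{0<..h}. f x \<le> 1 / (c * x)"
    and M: "M = density lborel (\<lambda>x. ennreal (f x))" and P: "prob_space M"
    unfolding PP_def by blast
  have eq: "distr M lborel (\<lambda>x. x powr r) = density lborel (\<lambda>t. ennreal (pw_dens f r t))"
    unfolding M using f0 fout assms(2) by (intro distr_powr_density) auto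
  show ?thesis unfolding PP_def
  proof (intro CollectI exI conjI allI ballI impI)
    show "pw_dens f r \<in> borel_measurable borel" by (rule pw_dens_meas[OF f])
    show "0 \<le> pw_dens f r x" for x using f0 assms(2) by (intro pw_dens_nonneg) auto
    show "pw_dens f r x = 0" if "x \<notin> {0..h powr r}" for x
    proof (cases "0 < x")
      case True
      then have "h powr r < x" using that by auto
      then have "(h powr r) powr (1/r) < x powr (1/r)" using assms by (intro powr_less_mono2) auto
      then have "h < x powr (1/r)" using assms by (simp add: powr_powr)
      then show ?thesis using fout unfolding pw_dens_def by auto
    qed (auto simp: pw_dens_def)
    show "pw_dens f r x \<le> 1 / (c * r * x)" if x: "x \<in> {0<..h powr r}" for x
    proof -
      have xp: "0 < x" using x by auto
      have "x powr (1/r) \<le> (h powr r) powr (1/r)" using x assms by (intro powr_mono2) auto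
      then have "x powr (1/r) \<le> h" using assms by (simp add: powr_powr)
      then have fb': "f (x powr (1/r)) \<le> 1 / (c * x powr (1/r))" using fb xp by auto
      have "pw_dens f r x = f (x powr (1/r)) * ((1/r) * x powr (1/r - 1))"
        using xp by (simp add: pw_dens_def)
      also have "\<dots> \<le> 1 / (c * x powr (1/r)) * ((1/r) * x powr (1/r - 1))"
        using fb' assms by (intro mult_right_mono) auto
      also have "\<dots> = 1 / (c * r * x)"
      proof -
        have "x powr (1/r - 1) = x powr (1/r) / x" using powr_diff[of x "1/r" 1] xp by simp
        moreover have "x powr (1/r) > 0" using xp by simp
        ultimately show ?thesis using xp c assms(2) by (simp add: field_simps)
      qed
      finally show ?thesis .
    qed
    show "distr M lborel (\<lambda>x. x powr r) = density lborel (\<lambda>t. ennreal (pw_dens f r t))" by (rule eq)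
    show "prob_space (distr M lborel (\<lambda>x. x powr r))"
      using P by (intro prob_space.prob_space_distr) (auto simp: M)
  qed
qed

lemma PP_pulled_back:
  assumes "M \<in> PP c h" "0 < r"
  shows "pulled_back M r (distr M lborel (\<lambda>x. x powr r))"
proof -
  from assms(1) obtain f where f[measurable]: "f \<in> borel_measurable borel" and f0: "\<forall>x. 0 \<le> f x"
    and fout: "\<forall>x. x \<notin> {0..h} \<longrightarrow> f x = 0"
    and M: "M = density lborel (\<lambda>x. ennreal (f x))"
    unfolding PP_def by blast
  have eq: "distr M lborel (\<lambda>x. x powr r) = density lborel (\<lambda>t. ennreal (pw_dens f r t))"
    unfolding M using f0 fout assms(2) by (intro distr_powr_density) auto
  show ?thesis unfolding pulled_back_def
  proof (intro exI conjI allI)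
    show "pw_dens f r \<in> borel_measurable borel" by (rule pw_dens_meas[OF f])
    show "0 \<le> pw_dens f r x" for x using f0 assms(2) by (intro pw_dens_nonneg) auto
    show "distr M lborel (\<lambda>x. x powr r) = density lborel (\<lambda>t. ennreal (pw_dens f r t))" by (rule eq)
    show "M = density lborel (\<lambda>x. ennreal (if 0 < x then r * x powr (r - 1) * pw_dens f r (x powr r) else 0))"
      unfolding M
    proof (intro density_cong)
      show "(\<lambda>x. ennreal (if 0 < x then r * x powr (r - 1) * pw_dens f r (x powr r) else 0)) \<in> borel_measurable lborel"
        using pw_dens_meas[OF f, of r] by measurable
      show "AE x in lborel. ennreal (f x) = ennreal (if 0 < x then r * x powr (r - 1) * pw_dens f r (x powr r) else 0)"
      using AE_lborel_singleton[of 0]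
    proof eventually_elim
      case (elim x)
      show ?case
      proof (cases "0 < x")
        case True
        then show ?thesis using pw_dens_back[OF assms(2) True, of f] by (simp add: mult_ac)
      next
        case False
        then show ?thesis using elim fout by auto
      qed
    qed
    qed simp
  qed
qed

lemma PP_distr_inv:
  assumes "N \<in> PP c h" "0 < r"
  shows "distr (distr N lborel (\<lambda>x. x powr (1/r))) lborel (\<lambda>x. x powr r) = N"
proof -
  from assms(1) obtain f where f[measurable]: "f \<in> borel_measurable borel"
    and fout: "\<forall>x. x \<notin> {0..h} \<longrightarrow> f x = 0"
    and N: "N = density lborel (\<lambda>x. ennreal (f x))"
    unfolding PP_def by blast
  have sN: "sets N = sets borel" by (simp add: N)
  have AEp: "AE x in N. 0 \<le> x"
  proof -
    have "AE x in lborel. 0 < ennreal (f x) \<longrightarrow> 0 \<le> x"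
    proof (rule AE_I2, rule impI, rule ccontr)
      fix x assume "0 < ennreal (f x)" "\<not> 0 \<le> x"
      then show False using fout by auto
    qed
    then show ?thesis unfolding N by (subst AE_density) auto
  qed
  have "distr (distr N lborel (\<lambda>x. x powr (1/r))) lborel (\<lambda>x. x powr r)
      = distr N lborel ((\<lambda>x. x powr r) \<circ> (\<lambda>x. x powr (1/r)))"
    by (rule distr_distr) (auto simp: measurable_cong_sets[OF sN refl])
  also have "\<dots> = distr N N (\<lambda>x. x)"
  proof (rule distr_cong_AE)
    show "AE x in N. ((\<lambda>x. x powr r) \<circ> (\<lambda>x. x powr (1/r))) x = x"
      using AEp by eventually_elim (use assms(2) in \<open>auto simp: powr_powr\<close>)
  qed (auto simp: sN measurable_cong_sets[OF sN refl] measurable_cong_sets[OF refl sN])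
  also have "\<dots> = N" by (rule distr_id2) simp
  finally show ?thesis .
qed


lemma double_distr:
  fixes F :: "real \<Rightarrow> real \<Rightarrow> ennreal"
  assumes P: "prob_space M" and sM: "sets M = sets borel"
    and T[measurable]: "T \<in> borel_measurable borel"
    and F[measurable]: "(\<lambda>(a, b). F a b) \<in> borel_measurable (borel \<Otimes>\<^sub>M borel)"
  shows "(\<integral>\<^sup>+t. \<integral>\<^sup>+s. F t s \<partial>distr M lborel T \<partial>distr M lborel T) = (\<integral>\<^sup>+x. \<integral>\<^sup>+y. F (T x) (T y) \<partial>M \<partial>M)"
proof -
  interpret prob_space M by (rule P)
  have TM: "T \<in> measurable M lborel" using T by (simp add: measurable_cong_sets[OF sM refl])
  have Ft[measurable]: "(\<lambda>s. F t s) \<in> borel_measurable borel" for t by measurable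
  have inner: "(\<integral>\<^sup>+s. F t s \<partial>distr M lborel T) = (\<integral>\<^sup>+y. F t (T y) \<partial>M)" for t
    by (rule nn_integral_distr[OF TM]) simp
  have G: "(\<lambda>(t, y). F t (T y)) \<in> borel_measurable (borel \<Otimes>\<^sub>M M)"
  proof -
    have "(\<lambda>(t, y). F t (T y)) \<in> borel_measurable (borel \<Otimes>\<^sub>M borel)" by measurable
    moreover have eqs: "sets (borel \<Otimes>\<^sub>M M) = sets (borel \<Otimes>\<^sub>M borel)"
      by (rule sets_pair_measure_cong) (simp_all add: sM)
    ultimately show ?thesis using measurable_cong_sets[OF eqs refl, of borel] by blast
  qed
  have Gm: "(\<lambda>t. \<integral>\<^sup>+y. F t (T y) \<partial>M) \<in> borel_measurable borel"
    using borel_measurable_nn_integral[of "\<lambda>t y. F t (T y)" borel] G by simp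
  have "(\<integral>\<^sup>+t. \<integral>\<^sup>+s. F t s \<partial>distr M lborel T \<partial>distr M lborel T)
      = (\<integral>\<^sup>+t. \<integral>\<^sup>+y. F t (T y) \<partial>M \<partial>distr M lborel T)" by (simp add: inner)
  also have "\<dots> = (\<integral>\<^sup>+x. \<integral>\<^sup>+y. F (T x) (T y) \<partial>M \<partial>M)"
    by (rule nn_integral_distr[OF TM]) (use Gm in simp)
  finally show ?thesis .
qed

lemma single_distr:
  fixes F :: "real \<Rightarrow> ennreal"
  assumes sM: "sets M = sets borel"
    and T[measurable]: "T \<in> borel_measurable borel"
    and F[measurable]: "F \<in> borel_measurable borel"
  shows "(\<integral>\<^sup>+t. F t \<partial>distr M lborel T) = (\<integral>\<^sup>+x. F (T x) \<partial>M)"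
proof -
  have TM: "T \<in> measurable M lborel" using T by (simp add: measurable_cong_sets[OF sM refl])
  show ?thesis by (rule nn_integral_distr[OF TM]) simp
qed

lemma K_meas:
  fixes phi :: "real \<Rightarrow> real"
  assumes [measurable]: "phi \<in> borel_measurable borel"
  shows "(\<lambda>x. \<integral>\<^sup>+u. indicator {n1..n2} u * ennreal (- ln (1 - phi x * exp (a * u))) \<partial>lborel) \<in> borel_measurable borel"
  by measurable

lemma H_meas:
  "(\<lambda>(a, b). ennreal (- (ln \<bar>a powr nu - b powr nu\<bar> + ln \<bar>a - b\<bar>))) \<in> borel_measurable (borel \<Otimes>\<^sub>M borel)"
  by measurable



lemma main_generic:
  fixes I MI :: "real measure \<Rightarrow> ennreal"
  assumes r: "0 < r" and k: "0 < k" and h: "0 < h"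
    and min: "is_min I (PP c h) mu"
    and iden: "\<And>M. M \<in> PP c h \<Longrightarrow> I M = ennreal k * MI (distr M lborel (\<lambda>x. x powr r))"
    and c': "c' = c * r" and h': "h' = h powr r"
  shows "\<exists>\<omega>. is_min MI (PP c' h') \<omega> \<and> pulled_back mu r \<omega>"
proof (intro exI conjI)
  have muP: "mu \<in> PP c h" using min by (simp add: is_min_def)
  define \<omega> where "\<omega> = distr mu lborel (\<lambda>x. x powr r)"
  show "pulled_back mu r \<omega>" unfolding \<omega>_def by (rule PP_pulled_back[OF muP r])
  show "is_min MI (PP c' h') \<omega>" unfolding is_min_def
  proof (intro conjI ballI)
    show "\<omega> \<in> PP c' h'" unfolding \<omega>_def c' h' by (rule PP_push[OF muP r h])
    fix N assume N: "N \<in> PP c' h'"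
    have h'p: "0 < h'" using h h' by simp
    have r': "0 < 1 / r" using r by simp
    define MN where "MN = distr N lborel (\<lambda>x. x powr (1/r))"
    have "MN \<in> PP (c' * (1/r)) (h' powr (1/r))" unfolding MN_def by (rule PP_push[OF N r' h'p])
    moreover have "c' * (1/r) = c" using c' r by simp
    moreover have "h' powr (1/r) = h" using h' r h by (simp add: powr_powr)
    ultimately have MNP: "MN \<in> PP c h" by simp
    have bk: "distr MN lborel (\<lambda>x. x powr r) = N" unfolding MN_def by (rule PP_distr_inv[OF N r])
    have "ennreal k * MI \<omega> = I mu" unfolding \<omega>_def using iden[OF muP] by simp
    also have "\<dots> \<le> I MN" using min MNP by (simp add: is_min_def)
    also have "\<dots> = ennreal k * MI N" using iden[OF MNP] bk by simp
    finally show "MI \<omega> \<le> MI N" using k by (simp add: ennreal_mult_le_mult_iff)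
  qed
qed


lemma PP_sets: "M \<in> PP c h \<Longrightarrow> sets M = sets borel"
  unfolding PP_def by auto

lemma PP_prob: "M \<in> PP c h \<Longrightarrow> prob_space M"
  unfolding PP_def by auto

lemma model_I_distr:
  fixes phi :: "real \<Rightarrow> real"
  assumes M: "M \<in> PP c h" and r: "0 < r" and phi[measurable]: "phi \<in> borel_measurable borel"
  shows "model_I nu phi beta kappa alpha m1 n1 n2 (distr M lborel (\<lambda>x. x powr r)) =
     ennreal (1/2) *
       (\<integral>\<^sup>+x. \<integral>\<^sup>+y. ennreal (- (ln \<bar>(x powr r) powr nu - (y powr r) powr nu\<bar> + ln \<bar>x powr r - y powr r\<bar>)) \<partial>M \<partial>M)
     + ennreal (1 / kappa) * (\<integral>\<^sup>+x. \<integral>\<^sup>+u. indicator {n1..n2} u *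
               ennreal (- ln (1 - phi (x powr r) * exp (- beta * alpha * u))) \<partial>lborel \<partial>M)
     + ennreal m1 * (ennreal r * (\<integral>\<^sup>+x. ennreal (- ln x) \<partial>M))"
proof -
  have sM: "sets M = sets borel" by (rule PP_sets[OF M])
  have P: "prob_space M" by (rule PP_prob[OF M])
  have T[measurable]: "(\<lambda>x::real. x powr r) \<in> borel_measurable borel" by measurable
  have A: "(\<integral>\<^sup>+t. \<integral>\<^sup>+s. ennreal (- (ln \<bar>t powr nu - s powr nu\<bar> + ln \<bar>t - s\<bar>)) \<partial>distr M lborel (\<lambda>x. x powr r) \<partial>distr M lborel (\<lambda>x. x powr r))
     = (\<integral>\<^sup>+x. \<integral>\<^sup>+y. ennreal (- (ln \<bar>(x powr r) powr nu - (y powr r) powr nu\<bar> + ln \<bar>x powr r - y powr r\<bar>)) \<partial>M \<partial>M)"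
    by (rule double_distr[OF P sM T, of "\<lambda>a b. ennreal (- (ln \<bar>a powr nu - b powr nu\<bar> + ln \<bar>a - b\<bar>))"]) measurable
  have B: "(\<integral>\<^sup>+t. \<integral>\<^sup>+u. indicator {n1..n2} u * ennreal (- ln (1 - phi t * exp (- beta * alpha * u))) \<partial>lborel \<partial>distr M lborel (\<lambda>x. x powr r))
     = (\<integral>\<^sup>+x. \<integral>\<^sup>+u. indicator {n1..n2} u * ennreal (- ln (1 - phi (x powr r) * exp (- beta * alpha * u))) \<partial>lborel \<partial>M)"
    by (rule single_distr[OF sM T]) measurable
  have Lm0: "(\<lambda>x::real. ennreal (- ln x)) \<in> borel_measurable borel" by measurable
  have Lm: "(\<lambda>x::real. ennreal (- ln x)) \<in> borel_measurable M"
    using Lm0 by (simp add: measurable_cong_sets[OF sM refl])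
  have C: "(\<integral>\<^sup>+t. ennreal (- ln t) \<partial>distr M lborel (\<lambda>x. x powr r)) = ennreal r * (\<integral>\<^sup>+x. ennreal (- ln x) \<partial>M)"
  proof -
    have "(\<integral>\<^sup>+t. ennreal (- ln t) \<partial>distr M lborel (\<lambda>x. x powr r)) = (\<integral>\<^sup>+x. ennreal (- ln (x powr r)) \<partial>M)"
      by (rule single_distr[OF sM T]) measurable
    also have "\<dots> = (\<integral>\<^sup>+x. ennreal r * ennreal (- ln x) \<partial>M)"
      using r by (intro nn_integral_cong) (simp add: ennreal_mult'[symmetric])
    also have "\<dots> = ennreal r * (\<integral>\<^sup>+x. ennreal (- ln x) \<partial>M)"
      by (rule nn_integral_cmult[OF Lm])
    finally show ?thesis .
  qed
  show ?thesis unfolding model_I_def A B C ..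
qed

lemma refl_K:
  fixes X a b c :: real
  shows "(\<integral>\<^sup>+u. indicator {a..b} u * ennreal (- ln (1 - X * exp (c * u))) \<partial>lborel)
       = (\<integral>\<^sup>+u. indicator {-b..-a} u * ennreal (- ln (1 - X * exp (- c * u))) \<partial>lborel)"
proof -
  have "(\<integral>\<^sup>+u. indicator {-b..-a} u * ennreal (- ln (1 - X * exp (- c * u))) \<partial>lborel)
     = (\<integral>\<^sup>+u. indicator {-b..-a} u * ennreal (- ln (1 - X * exp (- c * u))) \<partial>distr lborel borel uminus)"
    by (simp add: lborel_distr_uminus)
  also have "\<dots> = (\<integral>\<^sup>+u. indicator {-b..-a} (- u) * ennreal (- ln (1 - X * exp (- c * (- u)))) \<partial>lborel)"
    by (subst nn_integral_distr) auto
  also have "\<dots> = (\<integral>\<^sup>+u. indicator {a..b} u * ennreal (- ln (1 - X * exp (c * u))) \<partial>lborel)"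
    by (intro nn_integral_cong) (auto simp: indicator_def)
  finally show ?thesis by simp
qed

lemma combine:
  fixes A B C :: ennreal and k m1 r c3 :: real
  assumes "0 < k" "0 \<le> m1" "0 < r" "c3 = k\<^sup>2 * m1 * r"
  shows "ennreal (k\<^sup>2 / 2) * A + (ennreal k * B + ennreal c3 * C)
       = ennreal (k\<^sup>2) * (ennreal (1/2) * A + ennreal (1/k) * B + ennreal m1 * (ennreal r * C))"
proof -
  have e1: "ennreal (k\<^sup>2) * ennreal (1/2) = ennreal (k\<^sup>2 / 2)" by (subst ennreal_mult[symmetric]) auto
  have e2: "ennreal (k\<^sup>2) * ennreal (1/k) = ennreal k"
    using assms(1) by (subst ennreal_mult[symmetric]) (auto simp: power2_eq_square)
  have e3: "ennreal (k\<^sup>2) * ennreal m1 * ennreal r = ennreal c3"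
    using assms by (subst ennreal_mult[symmetric], simp, simp, subst ennreal_mult[symmetric]) auto
  have "ennreal (k\<^sup>2) * (ennreal (1/2) * A + ennreal (1/k) * B + ennreal m1 * (ennreal r * C))
     = (ennreal (k\<^sup>2) * ennreal (1/2)) * A + ((ennreal (k\<^sup>2) * ennreal (1/k)) * B + (ennreal (k\<^sup>2) * ennreal m1 * ennreal r) * C)"
    by (simp only: distrib_left mult.assoc add.assoc)
  then show ?thesis by (simp only: e1 e2 e3)
qed


lemma final_case:
  fixes phi :: "real \<Rightarrow> real"
  assumes r: "0 < r" and k: "0 < kappa" and kp: "kap gamma xi = kappa"
    and min: "is_min (Ixi eta theta gamma beta xi) (Pfrak gamma beta xi) mu"
    and iden: "\<And>M. M \<in> PP (beta * kappa) (exp (- beta * (gamma\<^sup>2 - kappa))) \<Longrightarrow>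
        Ixi eta theta gamma beta xi M = ennreal (kappa\<^sup>2) * model_I nu phi beta kappa alpha m1 n1 n2 (distr M lborel (\<lambda>x. x powr r))"
  shows "\<exists>\<omega>. model_min nu phi beta kappa alpha m1 n1 n2 r gamma \<omega> \<and> pulled_back mu r \<omega>"
  unfolding model_min_def
proof (rule main_generic[where k="kappa\<^sup>2" and c="beta * kappa" and h="exp (- beta * (gamma\<^sup>2 - kappa))", OF r])
  fix M assume "M \<in> PP (beta * kappa) (exp (- beta * (gamma\<^sup>2 - kappa)))"
  then show "Ixi eta theta gamma beta xi M = ennreal (kappa\<^sup>2) * model_I nu phi beta kappa alpha m1 n1 n2 (distr M lborel (\<lambda>x. x powr r))"
    by (rule iden)
next
  show "0 < kappa\<^sup>2" using k by simp
next
  show "0 < exp (- beta * (gamma\<^sup>2 - kappa))" by simp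
next
  show "is_min (Ixi eta theta gamma beta xi) (PP (beta * kappa) (exp (- beta * (gamma\<^sup>2 - kappa)))) mu"
    using min unfolding Pfrak_def kp .
next
  show "beta * r * kappa = beta * kappa * r" by simp
next
  show "exp (- r * beta * (gamma\<^sup>2 - kappa)) = exp (- beta * (gamma\<^sup>2 - kappa)) powr r"
    by (simp add: exp_powr_real mult_ac)
qed

lemma Ixi_i:
  assumes "xi \<le> 0"
  shows "Ixi eta theta gamma beta xi M =
    ennreal ((gamma\<^sup>2 - \<bar>xi\<bar>)\<^sup>2 / 2) *
       (\<integral>\<^sup>+x. \<integral>\<^sup>+y. ennreal (- (ln \<bar>x powr theta - y powr theta\<bar> + ln \<bar>x powr eta - y powr eta\<bar>)) \<partial>M \<partial>M)
    + (ennreal (gamma\<^sup>2 - \<bar>xi\<bar>) * (\<integral>\<^sup>+x. \<integral>\<^sup>+u. indicator {gamma\<^sup>2 - 1..\<bar>xi\<bar>} u *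
               ennreal (- ln (1 - x powr theta * exp (beta * theta * u))) \<partial>lborel \<partial>M)
     + ennreal ((gamma\<^sup>2 - \<bar>xi\<bar>) * eta * \<bar>xi\<bar>) * (\<integral>\<^sup>+x. ennreal (- ln x) \<partial>M))"
  using assms unfolding Ixi_def Let_def kap_def by simp

lemma Ixi_ii:
  assumes "0 < xi" "xi \<le> 1 - gamma\<^sup>2"
  shows "Ixi eta theta gamma beta xi M =
    ennreal ((gamma\<^sup>2)\<^sup>2 / 2) *
       (\<integral>\<^sup>+x. \<integral>\<^sup>+y. ennreal (- (ln \<bar>x powr theta - y powr theta\<bar> + ln \<bar>x powr eta - y powr eta\<bar>)) \<partial>M \<partial>M)
    + (ennreal (gamma\<^sup>2) * (\<integral>\<^sup>+x. \<integral>\<^sup>+u. indicator {0..1 - gamma\<^sup>2 - xi} u *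
               ennreal (- ln (1 - x powr theta * exp (- beta * theta * u))) \<partial>lborel \<partial>M)
     + ennreal (gamma\<^sup>2 * theta * xi) * (\<integral>\<^sup>+x. ennreal (- ln x) \<partial>M))"
  using assms unfolding Ixi_def Let_def kap_def by simp

lemma Ixi_iii:
  assumes "1 - gamma\<^sup>2 < xi" "0 < gamma" "gamma < 1"
  shows "Ixi eta theta gamma beta xi M =
    ennreal ((1 - xi)\<^sup>2 / 2) *
       (\<integral>\<^sup>+x. \<integral>\<^sup>+y. ennreal (- (ln \<bar>x powr theta - y powr theta\<bar> + ln \<bar>x powr eta - y powr eta\<bar>)) \<partial>M \<partial>M)
    + (ennreal (1 - xi) * (\<integral>\<^sup>+x. \<integral>\<^sup>+u. indicator {1 - gamma\<^sup>2 - xi..0} u *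
               ennreal (- ln (1 - x powr eta * exp (- beta * eta * u))) \<partial>lborel \<partial>M)
     + ennreal ((1 - xi) * theta * xi) * (\<integral>\<^sup>+x. ennreal (- ln x) \<partial>M))"
proof -
  have "gamma * gamma < 1 * 1" using assms by (intro mult_strict_mono) auto
  then have "0 < xi" using assms by (simp add: power2_eq_square)
  then show ?thesis using assms unfolding Ixi_def Let_def kap_def by simp
qed



lemma meas_powr: "(\<lambda>x::real. x powr a) \<in> borel_measurable borel" by measurable
lemma meas_id: "(\<lambda>x::real. x) \<in> borel_measurable borel" by simp

lemma A_gt:
  assumes "0 < eta"
  shows "(\<integral>\<^sup>+x. \<integral>\<^sup>+y. ennreal (- (ln \<bar>(x powr eta) powr (theta/eta) - (y powr eta) powr (theta/eta)\<bar> + ln \<bar>x powr eta - y powr eta\<bar>)) \<partial>M \<partial>M)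
       = (\<integral>\<^sup>+x. \<integral>\<^sup>+y. ennreal (- (ln \<bar>x powr theta - y powr theta\<bar> + ln \<bar>x powr eta - y powr eta\<bar>)) \<partial>M \<partial>M)"
  using assms by (simp add: powr_powr)

lemma A_lt:
  assumes "0 < theta"
  shows "(\<integral>\<^sup>+x. \<integral>\<^sup>+y. ennreal (- (ln \<bar>(x powr theta) powr (eta/theta) - (y powr theta) powr (eta/theta)\<bar> + ln \<bar>x powr theta - y powr theta\<bar>)) \<partial>M \<partial>M)
       = (\<integral>\<^sup>+x. \<integral>\<^sup>+y. ennreal (- (ln \<bar>x powr theta - y powr theta\<bar> + ln \<bar>x powr eta - y powr eta\<bar>)) \<partial>M \<partial>M)"
  using assms by (simp add: powr_powr add.commute)

lemma iden_gt_i: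
  assumes M: "M \<in> PP c h" and eta: "0 < eta" and xi: "xi \<le> 0" "- (gamma\<^sup>2) < xi"
  shows "Ixi eta theta gamma beta xi M = ennreal ((gamma\<^sup>2 - \<bar>xi\<bar>)\<^sup>2) *
     model_I (theta/eta) (\<lambda>x. x powr (theta/eta)) beta (gamma\<^sup>2 - \<bar>xi\<bar>) theta
            (\<bar>xi\<bar> / (gamma\<^sup>2 - \<bar>xi\<bar>)) (- \<bar>xi\<bar>) (1 - gamma\<^sup>2) (distr M lborel (\<lambda>x. x powr eta))"
proof -
  have k: "0 < gamma\<^sup>2 - \<bar>xi\<bar>" using xi by simp
  have B: "(\<integral>\<^sup>+x. \<integral>\<^sup>+u. indicator {- \<bar>xi\<bar>..1 - gamma\<^sup>2} u *
               ennreal (- ln (1 - (x powr eta) powr (theta/eta) * exp (- beta * theta * u))) \<partial>lborel \<partial>M)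
     = (\<integral>\<^sup>+x. \<integral>\<^sup>+u. indicator {gamma\<^sup>2 - 1..\<bar>xi\<bar>} u *
               ennreal (- ln (1 - x powr theta * exp (beta * theta * u))) \<partial>lborel \<partial>M)"
  proof (rule nn_integral_cong)
    fix x :: real
    have "(x powr eta) powr (theta/eta) = x powr theta" using eta by (simp add: powr_powr)
    then show "(\<integral>\<^sup>+u. indicator {- \<bar>xi\<bar>..1 - gamma\<^sup>2} u *
               ennreal (- ln (1 - (x powr eta) powr (theta/eta) * exp (- beta * theta * u))) \<partial>lborel)
     = (\<integral>\<^sup>+u. indicator {gamma\<^sup>2 - 1..\<bar>xi\<bar>} u *
               ennreal (- ln (1 - x powr theta * exp (beta * theta * u))) \<partial>lborel)"
      using refl_K[of "gamma\<^sup>2 - 1" "\<bar>xi\<bar>" "x powr theta" "beta * theta"] by simp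
  qed
  show ?thesis
    unfolding Ixi_i[OF xi(1)] model_I_distr[OF M eta, of "\<lambda>x. x powr (theta/eta)", OF meas_powr] A_gt[OF eta] B
    by (rule combine) (use k eta in \<open>auto simp: field_simps power2_eq_square\<close>)
qed

lemma iden_gt_ii:
  assumes M: "M \<in> PP c h" and eta: "0 < eta" and th: "0 < theta" and xi: "0 < xi" "xi \<le> 1 - gamma\<^sup>2" and g: "0 < gamma"
  shows "Ixi eta theta gamma beta xi M = ennreal ((gamma\<^sup>2)\<^sup>2) *
     model_I (theta/eta) (\<lambda>x. x powr (theta/eta)) beta (gamma\<^sup>2) theta
            (theta * xi / (eta * gamma\<^sup>2)) 0 (1 - gamma\<^sup>2 - xi) (distr M lborel (\<lambda>x. x powr eta))"
proof -
  have k: "0 < gamma\<^sup>2" using g by simp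
  have B: "(\<integral>\<^sup>+x. \<integral>\<^sup>+u. indicator {0..1 - gamma\<^sup>2 - xi} u *
               ennreal (- ln (1 - (x powr eta) powr (theta/eta) * exp (- beta * theta * u))) \<partial>lborel \<partial>M)
     = (\<integral>\<^sup>+x. \<integral>\<^sup>+u. indicator {0..1 - gamma\<^sup>2 - xi} u *
               ennreal (- ln (1 - x powr theta * exp (- beta * theta * u))) \<partial>lborel \<partial>M)"
    using eta by (simp add: powr_powr)
  show ?thesis
    unfolding Ixi_ii[OF xi] model_I_distr[OF M eta, of "\<lambda>x. x powr (theta/eta)", OF meas_powr] A_gt[OF eta] B
    by (rule combine) (use k eta th xi in \<open>auto simp: field_simps power2_eq_square\<close>)
qed

lemma iden_gt_iii:
  assumes M: "M \<in> PP c h" and eta: "0 < eta" and th: "0 < theta" and xi: "1 - gamma\<^sup>2 < xi" "xi < 1" and g: "0 < gamma" "gamma < 1"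
  shows "Ixi eta theta gamma beta xi M = ennreal ((1 - xi)\<^sup>2) *
     model_I (theta/eta) (\<lambda>x. x) beta (1 - xi) eta
            (theta * xi / (eta * (1 - xi))) (1 - gamma\<^sup>2 - xi) 0 (distr M lborel (\<lambda>x. x powr eta))"
proof -
  have k: "0 < 1 - xi" using xi by simp
  have "gamma * gamma < 1 * 1" using g by (intro mult_strict_mono) auto
  then have xp: "0 < xi" using xi by (simp add: power2_eq_square)
  show ?thesis
    unfolding Ixi_iii[OF xi(1) g] model_I_distr[OF M eta, of "\<lambda>x. x", OF meas_id] A_gt[OF eta]
    by (rule combine) (use k eta th xp in \<open>auto simp: field_simps power2_eq_square\<close>)
qed

lemma iden_lt_i:
  assumes M: "M \<in> PP c h" and th: "0 < theta" and eta: "0 < eta" and xi: "xi \<le> 0" "- (gamma\<^sup>2) < xi"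
  shows "Ixi eta theta gamma beta xi M = ennreal ((gamma\<^sup>2 - \<bar>xi\<bar>)\<^sup>2) *
     model_I (eta/theta) (\<lambda>x. x) beta (gamma\<^sup>2 - \<bar>xi\<bar>) theta
            (\<bar>xi\<bar> * eta / ((gamma\<^sup>2 - \<bar>xi\<bar>) * theta)) (- \<bar>xi\<bar>) (1 - gamma\<^sup>2) (distr M lborel (\<lambda>x. x powr theta))"
proof -
  have k: "0 < gamma\<^sup>2 - \<bar>xi\<bar>" using xi by simp
  have B: "(\<integral>\<^sup>+x. \<integral>\<^sup>+u. indicator {- \<bar>xi\<bar>..1 - gamma\<^sup>2} u *
               ennreal (- ln (1 - x powr theta * exp (- beta * theta * u))) \<partial>lborel \<partial>M)
     = (\<integral>\<^sup>+x. \<integral>\<^sup>+u. indicator {gamma\<^sup>2 - 1..\<bar>xi\<bar>} u *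
               ennreal (- ln (1 - x powr theta * exp (beta * theta * u))) \<partial>lborel \<partial>M)"
  proof (rule nn_integral_cong)
    fix x :: real
    show "(\<integral>\<^sup>+u. indicator {- \<bar>xi\<bar>..1 - gamma\<^sup>2} u *
               ennreal (- ln (1 - x powr theta * exp (- beta * theta * u))) \<partial>lborel)
     = (\<integral>\<^sup>+u. indicator {gamma\<^sup>2 - 1..\<bar>xi\<bar>} u *
               ennreal (- ln (1 - x powr theta * exp (beta * theta * u))) \<partial>lborel)"
      using refl_K[of "gamma\<^sup>2 - 1" "\<bar>xi\<bar>" "x powr theta" "beta * theta"] by simp
  qed
  show ?thesis
    unfolding Ixi_i[OF xi(1)] model_I_distr[OF M th, of "\<lambda>x. x", OF meas_id] A_lt[OF th] B
    by (rule combine) (use k eta th in \<open>auto simp: field_simps power2_eq_square\<close>)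
qed

lemma iden_lt_ii:
  assumes M: "M \<in> PP c h" and th: "0 < theta" and eta: "0 < eta" and xi: "0 < xi" "xi \<le> 1 - gamma\<^sup>2" and g: "0 < gamma"
  shows "Ixi eta theta gamma beta xi M = ennreal ((gamma\<^sup>2)\<^sup>2) *
     model_I (eta/theta) (\<lambda>x. x) beta (gamma\<^sup>2) theta
            (xi / gamma\<^sup>2) 0 (1 - gamma\<^sup>2 - xi) (distr M lborel (\<lambda>x. x powr theta))"
proof -
  have k: "0 < gamma\<^sup>2" using g by simp
  show ?thesis
    unfolding Ixi_ii[OF xi] model_I_distr[OF M th, of "\<lambda>x. x", OF meas_id] A_lt[OF th]
    by (rule combine) (use k eta th xi in \<open>auto simp: field_simps power2_eq_square\<close>)
qed

lemma iden_lt_iii: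
  assumes M: "M \<in> PP c h" and th: "0 < theta" and eta: "0 < eta" and xi: "1 - gamma\<^sup>2 < xi" "xi < 1" and g: "0 < gamma" "gamma < 1"
  shows "Ixi eta theta gamma beta xi M = ennreal ((1 - xi)\<^sup>2) *
     model_I (eta/theta) (\<lambda>x. x powr (eta/theta)) beta (1 - xi) eta
            (xi / (1 - xi)) (1 - gamma\<^sup>2 - xi) 0 (distr M lborel (\<lambda>x. x powr theta))"
proof -
  have k: "0 < 1 - xi" using xi by simp
  have "gamma * gamma < 1 * 1" using g by (intro mult_strict_mono) auto
  then have xp: "0 < xi" using xi by (simp add: power2_eq_square)
  have B: "(\<integral>\<^sup>+x. \<integral>\<^sup>+u. indicator {1 - gamma\<^sup>2 - xi..0} u *
               ennreal (- ln (1 - (x powr theta) powr (eta/theta) * exp (- beta * eta * u))) \<partial>lborel \<partial>M)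
     = (\<integral>\<^sup>+x. \<integral>\<^sup>+u. indicator {1 - gamma\<^sup>2 - xi..0} u *
               ennreal (- ln (1 - x powr eta * exp (- beta * eta * u))) \<partial>lborel \<partial>M)"
    using th by (simp add: powr_powr)
  show ?thesis
    unfolding Ixi_iii[OF xi(1) g] model_I_distr[OF M th, of "\<lambda>x. x powr (eta/theta)", OF meas_powr] A_lt[OF th] B
    by (rule combine) (use k eta th xp in \<open>auto simp: field_simps power2_eq_square\<close>)
qed



theorem corollary1p5:
  fixes eta theta gamma beta xi :: real and mu :: "real measure"
  assumes "eta > 0" "theta > 0" "0 < gamma" "gamma < 1" "beta > 0"
    and "- (gamma\<^sup>2) < xi" "xi \<le> 1"
    and "theta \<noteq> eta"
    and "is_min (Ixi eta theta gamma beta xi) (Pfrak gamma beta xi) mu"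
    and "\<forall>N. is_min (Ixi eta theta gamma beta xi) (Pfrak gamma beta xi) N \<longrightarrow> N = mu"
  shows
   "(theta > eta \<longrightarrow>
      (xi \<le> 0 \<longrightarrow> (\<exists>\<omega>. model_min (theta/eta) (\<lambda>x. x powr (theta/eta)) beta (gamma\<^sup>2 - \<bar>xi\<bar>) theta
            (\<bar>xi\<bar> / (gamma\<^sup>2 - \<bar>xi\<bar>)) (- \<bar>xi\<bar>) (1 - gamma\<^sup>2) eta gamma \<omega> \<and> pulled_back mu eta \<omega>))
    \<and> (0 < xi \<and> xi \<le> 1 - gamma\<^sup>2 \<longrightarrow> (\<exists>\<omega>. model_min (theta/eta) (\<lambda>x. x powr (theta/eta)) beta (gamma\<^sup>2) theta
            (theta * xi / (eta * gamma\<^sup>2)) 0 (1 - gamma\<^sup>2 - xi) eta gamma \<omega> \<and> pulled_back mu eta \<omega>))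
    \<and> (1 - gamma\<^sup>2 < xi \<longrightarrow> (\<exists>\<omega>. model_min (theta/eta) (\<lambda>x. x) beta (1 - xi) eta
            (theta * xi / (eta * (1 - xi))) (1 - gamma\<^sup>2 - xi) 0 eta gamma \<omega> \<and> pulled_back mu eta \<omega>)))
  \<and> (eta > theta \<longrightarrow>
      (xi \<le> 0 \<longrightarrow> (\<exists>\<omega>. model_min (eta/theta) (\<lambda>x. x) beta (gamma\<^sup>2 - \<bar>xi\<bar>) theta
            (\<bar>xi\<bar> * eta / ((gamma\<^sup>2 - \<bar>xi\<bar>) * theta)) (- \<bar>xi\<bar>) (1 - gamma\<^sup>2) theta gamma \<omega> \<and> pulled_back mu theta \<omega>))
    \<and> (0 < xi \<and> xi \<le> 1 - gamma\<^sup>2 \<longrightarrow> (\<exists>\<omega>. model_min (eta/theta) (\<lambda>x. x) beta (gamma\<^sup>2) theta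
            (xi / gamma\<^sup>2) 0 (1 - gamma\<^sup>2 - xi) theta gamma \<omega> \<and> pulled_back mu theta \<omega>))
    \<and> (1 - gamma\<^sup>2 < xi \<longrightarrow> (\<exists>\<omega>. model_min (eta/theta) (\<lambda>x. x powr (eta/theta)) beta (1 - xi) eta
            (xi / (1 - xi)) (1 - gamma\<^sup>2 - xi) 0 theta gamma \<omega> \<and> pulled_back mu theta \<omega>)))"
proof -
  note eta = assms(1) and th = assms(2) and g = assms(3,4) and b = assms(5) and xi = assms(6,7)
  note min = assms(9)
  have muP: "mu \<in> PP (beta * kap gamma xi) (exp (- beta * (gamma\<^sup>2 - kap gamma xi)))"
    using min unfolding is_min_def Pfrak_def by simp
  have "0 < beta * kap gamma xi" by (rule PP_pos[OF muP])
  then have kpos: "0 < kap gamma xi" using b by (simp add: zero_less_mult_iff)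
  have gsq: "gamma\<^sup>2 < 1"
  proof -
    have "gamma * gamma < 1 * 1" using g by (intro mult_strict_mono) auto
    then show ?thesis by (simp add: power2_eq_square)
  qed
  have k1: "kap gamma xi = gamma\<^sup>2 - \<bar>xi\<bar>" if "xi \<le> 0" using that by (simp add: kap_def)
  have k2: "kap gamma xi = gamma\<^sup>2" if "0 < xi" "xi \<le> 1 - gamma\<^sup>2" using that by (simp add: kap_def)
  have k3: "kap gamma xi = 1 - xi" if "1 - gamma\<^sup>2 < xi" using that gsq by (simp add: kap_def)
  have xlt: "xi < 1" if "1 - gamma\<^sup>2 < xi" using k3[OF that] kpos by simp
  have p1: "0 < gamma\<^sup>2 - \<bar>xi\<bar>" if "xi \<le> 0" using xi that by simp
  have p2: "0 < gamma\<^sup>2" using g by simp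
  show ?thesis
  proof (intro conjI impI)
    assume "xi \<le> 0"
    show "\<exists>\<omega>. model_min (theta/eta) (\<lambda>x. x powr (theta/eta)) beta (gamma\<^sup>2 - \<bar>xi\<bar>) theta
            (\<bar>xi\<bar> / (gamma\<^sup>2 - \<bar>xi\<bar>)) (- \<bar>xi\<bar>) (1 - gamma\<^sup>2) eta gamma \<omega> \<and> pulled_back mu eta \<omega>"
      by (rule final_case[OF eta p1[OF \<open>xi \<le> 0\<close>] k1[OF \<open>xi \<le> 0\<close>] min iden_gt_i[OF _ eta \<open>xi \<le> 0\<close> xi(1)]])
  next
    assume "0 < xi \<and> xi \<le> 1 - gamma\<^sup>2"
    then have x2: "0 < xi" "xi \<le> 1 - gamma\<^sup>2" by auto
    show "\<exists>\<omega>. model_min (theta/eta) (\<lambda>x. x powr (theta/eta)) beta (gamma\<^sup>2) theta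
            (theta * xi / (eta * gamma\<^sup>2)) 0 (1 - gamma\<^sup>2 - xi) eta gamma \<omega> \<and> pulled_back mu eta \<omega>"
      by (rule final_case[OF eta p2 k2[OF x2] min iden_gt_ii[OF _ eta th x2 g(1)]])
  next
    assume x3: "1 - gamma\<^sup>2 < xi"
    have p3: "0 < 1 - xi" using xlt[OF x3] by simp
    show "\<exists>\<omega>. model_min (theta/eta) (\<lambda>x. x) beta (1 - xi) eta
            (theta * xi / (eta * (1 - xi))) (1 - gamma\<^sup>2 - xi) 0 eta gamma \<omega> \<and> pulled_back mu eta \<omega>"
      by (rule final_case[OF eta p3 k3[OF x3] min iden_gt_iii[OF _ eta th x3 xlt[OF x3] g]])
  next
    assume "xi \<le> 0"
    show "\<exists>\<omega>. model_min (eta/theta) (\<lambda>x. x) beta (gamma\<^sup>2 - \<bar>xi\<bar>) theta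
            (\<bar>xi\<bar> * eta / ((gamma\<^sup>2 - \<bar>xi\<bar>) * theta)) (- \<bar>xi\<bar>) (1 - gamma\<^sup>2) theta gamma \<omega> \<and> pulled_back mu theta \<omega>"
      by (rule final_case[OF th p1[OF \<open>xi \<le> 0\<close>] k1[OF \<open>xi \<le> 0\<close>] min iden_lt_i[OF _ th eta \<open>xi \<le> 0\<close> xi(1)]])
  next
    assume "0 < xi \<and> xi \<le> 1 - gamma\<^sup>2"
    then have x2: "0 < xi" "xi \<le> 1 - gamma\<^sup>2" by auto
    show "\<exists>\<omega>. model_min (eta/theta) (\<lambda>x. x) beta (gamma\<^sup>2) theta
            (xi / gamma\<^sup>2) 0 (1 - gamma\<^sup>2 - xi) theta gamma \<omega> \<and> pulled_back mu theta \<omega>"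
      by (rule final_case[OF th p2 k2[OF x2] min iden_lt_ii[OF _ th eta x2 g(1)]])
  next
    assume x3: "1 - gamma\<^sup>2 < xi"
    have p3: "0 < 1 - xi" using xlt[OF x3] by simp
    show "\<exists>\<omega>. model_min (eta/theta) (\<lambda>x. x powr (eta/theta)) beta (1 - xi) eta
            (xi / (1 - xi)) (1 - gamma\<^sup>2 - xi) 0 theta gamma \<omega> \<and> pulled_back mu theta \<omega>"
      by (rule final_case[OF th p3 k3[OF x3] min iden_lt_iii[OF _ th eta x3 xlt[OF x3] g]])
  qed
qed


end
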